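(* Let $n\ge 1$, $d\ge 1$ and $m\ge 1$ be integers, let $p\in(0,1)$ and $\delta\in(0,1)$, and let $I\subseteq[n]$ be a fixed set with $|I|\le d$. Let $M$ be a random $m\times n$ matrix whose entries are independent, each equal to $0$ with probability $p$ and to $1$ with probability $1-p$. For integers $d_1,d_2,k$ put $$P(n,d_1,d_2,k,p)=n^{d_2-k}\left(1-p^{d_2}-p^{d_1}+2p^{d_1+d_2-k}\right)^m,$$ and let $\Pi=\max P(n,d_1,d_2,k,p)$, the maximum being over all integers $d_1,d_2,k$ with $0\le d_1,d_2\le d$, $0\le k\le\min(d_1,d_2)$, excluding the triples with $d_1=d_2=k$. If $\Pi\le \delta/(d^2 2^d)$, then with probability at least $1-\delta$ the matrix $M$ is $(I,d)$-separable.
   Context: For $J\subseteq[n]$ and $a\in\{0,1\}^n$, $T(J,a)=1$ if $a_j=1$ for some $j\in J$ and $T(J,a)=0$ otherwise (so $T(\emptyset,a)=0$). For an $m\times n$ 0/1 matrix $M$ with rows $M_1,\dots,M_m$, $T(J,M)$ is the vector $(T(J,M_i))_{i=1}^m$. The matrix $M$ is called $(I,d)$-separable if for every $J\subseteq[n]$ with $|J|\le d$ and $J\ne I$ we have $T(J,M)\ne T(I,M)$. *)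

theory Defs
  imports "HOL-Probability.Probability"
begin

text \<open>A 0/1 matrix with m rows and n columns is a function (nat \<times> nat \<Rightarrow> bool);
  entry (i,j) with i \<in> {1..m}, j \<in> {1..n}; True encodes 1, False encodes 0.\<close>

definition T_row :: "nat set \<Rightarrow> (nat \<Rightarrow> bool) \<Rightarrow> bool" where
  "T_row J a = (\<exists>j\<in>J. a j)"

definition T_mat :: "nat \<Rightarrow> nat set \<Rightarrow> (nat \<times> nat \<Rightarrow> bool) \<Rightarrow> (nat \<Rightarrow> bool)" where
  "T_mat m J M = (\<lambda>i\<in>{1..m}. T_row J (\<lambda>j. M (i, j)))"

definition separable :: "nat \<Rightarrow> nat \<Rightarrow> (nat \<times> nat \<Rightarrow> bool) \<Rightarrow> nat set \<Rightarrow> nat \<Rightarrow> bool" where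
  "separable m n M I d =
     (\<forall>J. J \<subseteq> {1..n} \<and> card J \<le> d \<and> J \<noteq> I \<longrightarrow> T_mat m J M \<noteq> T_mat m I M)"

definition random_matrix :: "nat \<Rightarrow> nat \<Rightarrow> real \<Rightarrow> (nat \<times> nat \<Rightarrow> bool) pmf" where
  "random_matrix m n p = Pi_pmf ({1..m} \<times> {1..n}) False (\<lambda>_. bernoulli_pmf (1 - p))"

definition Pfun :: "nat \<Rightarrow> nat \<Rightarrow> nat \<Rightarrow> nat \<Rightarrow> nat \<Rightarrow> real \<Rightarrow> real" where
  "Pfun m n d1 d2 k p =
     real n ^ (d2 - k) * (1 - p ^ d2 - p ^ d1 + 2 * p ^ (d1 + d2 - k)) ^ m"

definition triples :: "nat \<Rightarrow> (nat \<times> nat \<times> nat) set" where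
  "triples d = {(d1, d2, k). d1 \<le> d \<and> d2 \<le> d \<and> k \<le> min d1 d2 \<and> \<not> (d1 = d2 \<and> d2 = k)}"

definition PiMax :: "nat \<Rightarrow> nat \<Rightarrow> nat \<Rightarrow> real \<Rightarrow> real" where
  "PiMax m n d p = Max ((\<lambda>(d1, d2, k). Pfun m n d1 d2 k p) ` triples d)"

end

theory Submission
  imports Defs
begin

definition rowev :: "nat set \<Rightarrow> nat set \<Rightarrow> nat \<Rightarrow> (nat \<times> nat \<Rightarrow> bool) \<Rightarrow> bool" where
  "rowev I J i M = (T_row J (\<lambda>j. M (i, j)) = T_row I (\<lambda>j. M (i, j)))"

lemma rowev_cong:
  assumes "I \<subseteq> N" "J \<subseteq> N" "\<And>j. j \<in> N \<Longrightarrow> M (i, j) = M' (i, j)"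
  shows "rowev I J i M = rowev I J i M'"
  using assms unfolding rowev_def T_row_def by blast

lemma prob_pair_times:
  "measure_pmf.prob (pair_pmf P Q) (A \<times> B) = measure_pmf.prob P A * measure_pmf.prob Q B"
proof -
  have "measure_pmf.prob (pair_pmf P Q) (A \<times> B) =
        measure_pmf.prob (pair_pmf P Q) ((A \<times> B) \<inter> set_pmf (pair_pmf P Q))"
    by (rule measure_Int_set_pmf[symmetric])
  also have "(A \<times> B) \<inter> set_pmf (pair_pmf P Q) = (A \<inter> set_pmf P) \<times> (B \<inter> set_pmf Q)"
    by auto
  also have "measure_pmf.prob (pair_pmf P Q) \<dots> =
       measure_pmf.prob P (A \<inter> set_pmf P) * measure_pmf.prob Q (B \<inter> set_pmf Q)"
    by (intro measure_pmf_prob_product) auto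
  finally show ?thesis by (simp add: measure_Int_set_pmf)
qed

lemma rows_prob:
  fixes Q :: "bool pmf"
  assumes "finite S" "I \<subseteq> N" "J \<subseteq> N" "finite N"
  shows "measure_pmf.prob (Pi_pmf (S \<times> N) False (\<lambda>_. Q)) {M. \<forall>i\<in>S. rowev I J i M} =
     (\<Prod>i\<in>S. measure_pmf.prob (Pi_pmf ({i} \<times> N) False (\<lambda>_. Q)) {M. rowev I J i M})"
  using assms(1)
proof (induction S rule: finite_induct)
  case empty
  then show ?case by simp
next
  case (insert x S)
  define h where "h = (\<lambda>(f,g) y. if y \<in> {x} \<times> N then f y else (g y::bool))"
  have eq: "insert x S \<times> N = ({x} \<times> N) \<union> (S \<times> N)" by auto
  have "Pi_pmf (insert x S \<times> N) False (\<lambda>_. Q) =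
     map_pmf h (pair_pmf (Pi_pmf ({x} \<times> N) False (\<lambda>_. Q)) (Pi_pmf (S \<times> N) False (\<lambda>_. Q)))"
    unfolding eq h_def using insert assms by (intro Pi_pmf_union) auto
  moreover have "h -` {M. \<forall>i\<in>insert x S. rowev I J i M} =
      {M. rowev I J x M} \<times> {M. \<forall>i\<in>S. rowev I J i M}"
  proof -
    have 1: "rowev I J x (h (f,g)) = rowev I J x f" for f g
      unfolding h_def by (rule rowev_cong[OF assms(2,3)]) auto
    have 2: "rowev I J i (h (f,g)) = rowev I J i g" if "i \<in> S" for f g i
      unfolding h_def by (rule rowev_cong[OF assms(2,3)]) (use that insert in auto)
    show ?thesis using 1 2 by auto
  qed
  ultimately show ?case using insert by (simp add: prob_pair_times)
qed

lemma z_prob: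
  assumes "finite N" "A \<subseteq> N" "0 \<le> p" "p \<le> 1"
  shows "measure_pmf.prob (Pi_pmf ({i} \<times> N) False (\<lambda>_. bernoulli_pmf (1 - p)))
           {M. \<forall>j\<in>A. \<not> M (i, j)} = p ^ card A"
proof -
  have "{M. \<forall>j\<in>A. \<not> M (i, j)} = Pi ({i} \<times> N) (\<lambda>y. if snd y \<in> A then {False} else UNIV)"
    using assms(2) by (auto simp: Pi_def)
  hence "measure_pmf.prob (Pi_pmf ({i} \<times> N) False (\<lambda>_. bernoulli_pmf (1 - p)))
           {M. \<forall>j\<in>A. \<not> M (i, j)} =
     (\<Prod>y\<in>{i} \<times> N. measure_pmf.prob (bernoulli_pmf (1 - p)) (if snd y \<in> A then {False} else UNIV))"
    using assms by (simp add: measure_Pi_pmf_Pi)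
  also have "\<dots> = (\<Prod>y\<in>{i} \<times> N. if snd y \<in> A then p else 1)"
    using assms by (intro prod.cong) (auto simp: measure_pmf_single)
  also have "\<dots> = (\<Prod>j\<in>N. if j \<in> A then p else 1)"
  proof -
    have "{i} \<times> N = Pair i ` N" by auto
    thus ?thesis by (simp add: prod.reindex inj_on_def)
  qed
  also have "\<dots> = p ^ card A"
    using assms by (simp add: prod.If_cases Int_absorb1 inf.absorb2)
  finally show ?thesis .
qed

lemma row_prob:
  assumes "finite N" "I \<subseteq> N" "J \<subseteq> N" "0 \<le> p" "p \<le> 1"
  shows "measure_pmf.prob (Pi_pmf ({i} \<times> N) False (\<lambda>_. bernoulli_pmf (1 - p)))
           {M. rowev I J i M} = 1 - p ^ card J - p ^ card I + 2 * p ^ card (I \<union> J)"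
proof -
  let ?P = "Pi_pmf ({i} \<times> N) False (\<lambda>_. bernoulli_pmf (1 - p))"
  define Z where "Z A = {M. \<forall>j\<in>A. \<not> M (i, (j::nat))}" for A
  have zp: "measure_pmf.prob ?P (Z A) = p ^ card A" if "A \<subseteq> N" for A
    unfolding Z_def using z_prob[OF assms(1) that assms(4,5)] .
  have ZU: "Z I \<inter> Z J = Z (I \<union> J)" by (auto simp: Z_def)
  have eq: "{M. rowev I J i M} = Z (I \<union> J) \<union> (UNIV - (Z I \<union> Z J))"
    by (auto simp: Z_def rowev_def T_row_def)
  have "measure_pmf.prob ?P {M. rowev I J i M} =
        measure_pmf.prob ?P (Z (I \<union> J)) + measure_pmf.prob ?P (UNIV - (Z I \<union> Z J))"
    unfolding eq by (rule measure_pmf.finite_measure_Union) (auto simp: ZU[symmetric])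
  also have "measure_pmf.prob ?P (UNIV - (Z I \<union> Z J)) = 1 - measure_pmf.prob ?P (Z I \<union> Z J)"
    using measure_pmf.prob_compl[of "Z I \<union> Z J" ?P] by simp
  also have "measure_pmf.prob ?P (Z I \<union> Z J) = measure_pmf.prob ?P (Z I) + measure_pmf.prob ?P (Z J - Z I)"
    by (rule measure_pmf.finite_measure_Union') auto
  also have "measure_pmf.prob ?P (Z J - Z I) = measure_pmf.prob ?P (Z J) - measure_pmf.prob ?P (Z J \<inter> Z I)"
    by (rule measure_pmf.finite_measure_Diff') auto
  finally show ?thesis using assms
    by (simp add: zp Int_commute[of "Z J"] ZU)
qed

lemma h_bound:
  assumes "finite C" "card C \<le> n" "n \<ge> 1"
  shows "(\<Sum>B\<in>{B. B \<subseteq> C \<and> card B \<le> s}. 1 / real n ^ card B) \<le> real s + 1"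
proof -
  have fin: "finite {B. B \<subseteq> C \<and> card B \<le> s}" using assms(1) by simp
  have "(\<Sum>B\<in>{B. B \<subseteq> C \<and> card B \<le> s}. 1 / real n ^ card B) =
     (\<Sum>t\<in>{..s}. \<Sum>B\<in>{B \<in> {B. B \<subseteq> C \<and> card B \<le> s}. card B = t}. 1 / real n ^ card B)"
    by (rule sum.group[symmetric]) (use fin in auto)
  also have "\<dots> \<le> (\<Sum>t\<in>{..s}. 1)"
  proof (rule sum_mono)
    fix t assume t: "t \<in> {..s}"
    have "{B \<in> {B. B \<subseteq> C \<and> card B \<le> s}. card B = t} = {B. B \<subseteq> C \<and> card B = t}"
      using t by auto
    hence "(\<Sum>B\<in>{B \<in> {B. B \<subseteq> C \<and> card B \<le> s}. card B = t}. 1 / real n ^ card B)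
         = (\<Sum>B\<in>{B. B \<subseteq> C \<and> card B = t}. 1 / real n ^ t)" by simp
    also have "\<dots> = real (card C choose t) / real n ^ t"
      using n_subsets[OF assms(1), of t] by simp
    also have "\<dots> \<le> 1"
    proof -
      have "card C choose t \<le> card C ^ t"
        by (cases "t \<le> card C") (auto intro: binomial_le_pow simp: binomial_eq_0)
      also have "\<dots> \<le> n ^ t" using assms(2) by (rule power_mono) simp
      finally have "real (card C choose t) \<le> real n ^ t" by (metis of_nat_le_iff of_nat_power)
      thus ?thesis using assms(3) by simp
    qed
    finally show "(\<Sum>B\<in>{B \<in> {B. B \<subseteq> C \<and> card B \<le> s}. card B = t}. 1 / real n ^ card B) \<le> 1" .
  qed
  also have "\<dots> = real s + 1" by simp
  finally show ?thesis .
qed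

lemma count_bound:
  fixes I N :: "nat set"
  assumes "finite N" "I \<subseteq> N" "card N \<le> n" "n \<ge> 1" "card I \<le> d"
  shows "(\<Sum>J\<in>{J. J \<subseteq> N \<and> card J \<le> d}. 1 / real n ^ card (J - I)) \<le> real d * 2 ^ card I + 1"
proof -
  define C where "C = N - I"
  have finI: "finite I" using assms(1,2) finite_subset by blast
  have finC: "finite C" using assms(1) C_def by simp
  have cC: "card C \<le> n" using assms(1,3) C_def by (meson Diff_subset card_mono le_trans)
  define S where "S = Sigma (Pow I) (\<lambda>A. {B. B \<subseteq> C \<and> card B \<le> d - card A})"
  define f where "f = (\<lambda>(A, B). A \<union> (B::nat set))"
  define w where "w = (\<lambda>J. 1 / real n ^ card (J - I))"
  have finS: "finite S" unfolding S_def using finI finC by (intro finite_SigmaI) auto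
  have sub: "{J. J \<subseteq> N \<and> card J \<le> d} \<subseteq> f ` S"
  proof
    fix J assume J: "J \<in> {J. J \<subseteq> N \<and> card J \<le> d}"
    have fJ: "finite J" using J assms(1) finite_subset by auto
    have "card (J \<inter> I) + card (J - I) = card J" using fJ
      by (metis Diff_Diff_Int Int_commute card_Diff_subset_Int card_Int_Diff finite_Diff)
    hence "(J \<inter> I, J - I) \<in> S" using J unfolding S_def C_def by auto
    moreover have "J = f (J \<inter> I, J - I)" unfolding f_def by auto
    ultimately show "J \<in> f ` S" by blast
  qed
  have "(\<Sum>J\<in>{J. J \<subseteq> N \<and> card J \<le> d}. w J) \<le> (\<Sum>J\<in>f ` S. w J)"
    by (rule sum_mono2) (use finS sub in \<open>auto simp: w_def\<close>)
  also have "\<dots> \<le> (\<Sum>x\<in>S. w (f x))"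
    using sum_image_le[OF finS, of w f] by (simp add: w_def o_def)
  also have "\<dots> = (\<Sum>A\<in>Pow I. \<Sum>B\<in>{B. B \<subseteq> C \<and> card B \<le> d - card A}. w (A \<union> B))"
  proof -
    have eq: "(\<Sum>A\<in>Pow I. \<Sum>B\<in>{B. B \<subseteq> C \<and> card B \<le> d - card A}. w (A \<union> B))
       = (\<Sum>(A,B)\<in>S. w (A \<union> B))" unfolding S_def
      by (rule sum.Sigma) (use finI finC in auto)
    show ?thesis unfolding eq[unfolded split_def] unfolding f_def split_def ..
  qed
  also have "\<dots> = (\<Sum>A\<in>Pow I. \<Sum>B\<in>{B. B \<subseteq> C \<and> card B \<le> d - card A}. 1 / real n ^ card B)"
  proof (intro sum.cong refl)
    fix A B assume "A \<in> Pow I" "B \<in> {B. B \<subseteq> C \<and> card B \<le> d - card A}"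
    hence "A \<union> B - I = B" unfolding C_def by auto
    thus "w (A \<union> B) = 1 / real n ^ card B" unfolding w_def by simp
  qed
  also have "\<dots> \<le> (\<Sum>A\<in>Pow I. real (d - card A) + 1)"
    by (intro sum_mono h_bound finC cC assms(4))
  also have "\<dots> \<le> (\<Sum>A\<in>Pow I. real d + (if A = {} then 1 else 0))"
  proof (rule sum_mono)
    fix A assume A: "A \<in> Pow I"
    hence "finite A" using finI finite_subset by auto
    hence "A \<noteq> {} \<Longrightarrow> card A \<ge> 1" by (simp add: Suc_leI card_gt_0_iff)
    moreover have "card A \<le> d" using card_mono[OF finI, of A] A assms(5) by simp
    ultimately show "real (d - card A) + 1 \<le> real d + (if A = {} then 1 else 0)" by auto
  qed
  also have "\<dots> = real d * 2 ^ card I + 1"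
    using finI by (simp add: sum.distrib card_Pow)
  finally show ?thesis unfolding w_def .
qed

lemma restrict_eq_iff': "(restrict f A = restrict g A) = (\<forall>x\<in>A. f x = g x)"
proof
  assume eq: "restrict f A = restrict g A"
  show "\<forall>x\<in>A. f x = g x"
  proof
    fix x assume "x \<in> A"
    thus "f x = g x" using fun_cong[OF eq, of x] by simp
  qed
qed (auto intro: restrict_ext)

lemma card_J_I:
  fixes I J :: "nat set"
  assumes "finite I" "finite J"
  shows "card (J - I) = card J - card (I \<inter> J)" "card (I \<union> J) = card I + card J - card (I \<inter> J)"
  using assms card_Diff_subset_Int[of J I] card_Un_Int[of I J]
  by (auto simp: Int_commute Diff_Int2)

theorem lemma1:
  fixes n d m :: nat and p \<delta> :: real and I :: "nat set"
  assumes "n \<ge> 1" "d \<ge> 1" "m \<ge> 1"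
    and "0 < p" "p < 1" "0 < \<delta>" "\<delta> < 1"
    and "I \<subseteq> {1..n}" "card I \<le> d"
    and "PiMax m n d p \<le> \<delta> / (real d ^ 2 * 2 ^ d)"
  shows "measure_pmf.prob (random_matrix m n p) {M. separable m n M I d} \<ge> 1 - \<delta>"
proof -
  let ?R = "random_matrix m n p"
  define F where "F = {J. J \<subseteq> {1..n} \<and> card J \<le> d \<and> J \<noteq> I}"
  define E where "E J = {M. T_mat m J M = T_mat m I M}" for J
  define q where "q J = 1 - p ^ card J - p ^ card I + 2 * p ^ card (I \<union> J)" for J
  have finI: "finite I" using assms(8) finite_subset by blast
  have finF: "finite F" unfolding F_def by (rule finite_subset[of _ "Pow {1..n}"]) auto
  have EJ: "E J = {M. \<forall>i\<in>{1..m}. rowev I J i M}" for J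
  proof (rule set_eqI)
    fix M
    show "M \<in> E J \<longleftrightarrow> M \<in> {M. \<forall>i\<in>{1..m}. rowev I J i M}"
      unfolding E_def T_mat_def rowev_def mem_Collect_eq
      by (simp only: restrict_eq_iff')
  qed
  have probE: "measure_pmf.prob ?R (E J) = q J ^ m" if "J \<subseteq> {1..n}" for J
  proof -
    have "measure_pmf.prob ?R (E J) =
       (\<Prod>i\<in>{1..m}. measure_pmf.prob (Pi_pmf ({i} \<times> {1..n}) False (\<lambda>_. bernoulli_pmf (1 - p))) {M. rowev I J i M})"
      unfolding random_matrix_def EJ by (rule rows_prob) (use assms(8) that in auto)
    also have "\<dots> = (\<Prod>i\<in>{1..m}. q J)"
      using assms(4,5,8) that by (intro prod.cong refl, subst row_prob) (auto simp: q_def)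
    finally show ?thesis by simp
  qed
  have sep: "{M. separable m n M I d} = UNIV - (\<Union>J\<in>F. E J)"
    by (auto simp: separable_def F_def E_def)
  have P1: "measure_pmf.prob ?R {M. separable m n M I d} = 1 - measure_pmf.prob ?R (\<Union>J\<in>F. E J)"
    unfolding sep using measure_pmf.prob_compl[of "\<Union>J\<in>F. E J" ?R] by simp
  have P2: "measure_pmf.prob ?R (\<Union>J\<in>F. E J) \<le> (\<Sum>J\<in>F. measure_pmf.prob ?R (E J))"
    by (rule measure_pmf.finite_measure_subadditive_finite) (use finF in auto)
  have finT: "finite ((\<lambda>(d1, d2, k). Pfun m n d1 d2 k p) ` triples d)"
  proof -
    have "triples d \<subseteq> {..d} \<times> {..d} \<times> {..d}" by (auto simp: triples_def)
    thus ?thesis by (meson finite_SigmaI finite_atMost finite_imageI finite_subset)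
  qed
  have Pi0: "PiMax m n d p \<ge> 0"
  proof -
    have "(1, 0, 0) \<in> triples d" using assms(2) by (auto simp: triples_def)
    hence "Pfun m n 1 0 0 p \<le> PiMax m n d p"
      unfolding PiMax_def by (intro Max_ge finT) force
    moreover have "Pfun m n 1 0 0 p = p ^ m" by (simp add: Pfun_def)
    ultimately show ?thesis using assms(4) by (metis order.trans zero_le_power less_imp_le)
  qed
  have each: "measure_pmf.prob ?R (E J) \<le> PiMax m n d p * (1 / real n ^ card (J - I))" if J: "J \<in> F" for J
  proof -
    have JN: "J \<subseteq> {1..n}" and cJ: "card J \<le> d" and JI: "J \<noteq> I" using J by (auto simp: F_def)
    have finJ: "finite J" using JN finite_subset by blast
    have kI: "card (I \<inter> J) \<le> card I" "card (I \<inter> J) \<le> card J"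
      using finI finJ by (auto intro: card_mono)
    have tr: "(card I, card J, card (I \<inter> J)) \<in> triples d"
    proof -
      have "\<not> (card I = card J \<and> card J = card (I \<inter> J))"
      proof
        assume h: "card I = card J \<and> card J = card (I \<inter> J)"
        hence "I \<inter> J = I" using finI by (metis Int_lower1 card_subset_eq)
        hence "I \<subseteq> J" by blast
        hence "I = J" using h finJ by (metis card_subset_eq)
        thus False using JI by simp
      qed
      thus ?thesis using kI cJ assms(9) by (auto simp: triples_def)
    qed
    have "Pfun m n (card I) (card J) (card (I \<inter> J)) p \<le> PiMax m n d p"
      unfolding PiMax_def by (intro Max_ge finT) (use tr in force)
    moreover have "Pfun m n (card I) (card J) (card (I \<inter> J)) p = real n ^ card (J - I) * q J ^ m"
      unfolding Pfun_def q_def using card_J_I[OF finI finJ] by simp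
    ultimately have "real n ^ card (J - I) * q J ^ m \<le> PiMax m n d p" by simp
    moreover have "real n ^ card (J - I) > 0" using assms(1) by simp
    ultimately have "q J ^ m \<le> PiMax m n d p / real n ^ card (J - I)"
      by (simp add: field_simps mult.commute)
    thus ?thesis using probE[OF JN] by simp
  qed
  have W: "(\<Sum>J\<in>F. 1 / real n ^ card (J - I)) \<le> real d * 2 ^ card I"
  proof -
    have FF: "F = {J. J \<subseteq> {1..n} \<and> card J \<le> d} - {I}" unfolding F_def by auto
    have Iin: "I \<in> {J. J \<subseteq> {1..n} \<and> card J \<le> d}" using assms(8,9) by auto
    have fin': "finite {J. J \<subseteq> {1..n} \<and> card J \<le> d}"
      by (rule finite_subset[of _ "Pow {1..n}"]) auto
    have "(\<Sum>J\<in>F. 1 / real n ^ card (J - I)) =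
      (\<Sum>J\<in>{J. J \<subseteq> {1..n} \<and> card J \<le> d}. 1 / real n ^ card (J - I)) - 1"
      unfolding FF using sum_diff1[OF fin', of "\<lambda>J. 1 / real n ^ card (J - I)" I] Iin by simp
    also have "\<dots> \<le> real d * 2 ^ card I"
      using count_bound[of "{1..n}" I n d] assms(1,8,9) by simp
    finally show ?thesis .
  qed
  have "(\<Sum>J\<in>F. measure_pmf.prob ?R (E J)) \<le> (\<Sum>J\<in>F. PiMax m n d p * (1 / real n ^ card (J - I)))"
    by (rule sum_mono) (rule each)
  also have "\<dots> = PiMax m n d p * (\<Sum>J\<in>F. 1 / real n ^ card (J - I))"
    by (simp add: sum_distrib_left)
  also have "\<dots> \<le> PiMax m n d p * (real d * 2 ^ card I)"
    by (rule mult_left_mono[OF W Pi0])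
  also have "\<dots> \<le> \<delta> / (real d ^ 2 * 2 ^ d) * (real d * 2 ^ d)"
  proof (rule mult_mono[OF assms(10)])
    show "real d * 2 ^ card I \<le> real d * 2 ^ d"
      using assms(9) by (intro mult_left_mono power_increasing) auto
  qed (use Pi0 assms(6) in auto)
  also have "\<dots> = \<delta> / real d"
    using assms(2) by (simp add: power2_eq_square field_simps)
  also have "\<dots> \<le> \<delta>"
    using assms(2,6) by (simp add: divide_le_eq)
  finally show ?thesis using P1 P2 by linarith
qed

end
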